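(* Let $\psi$ be a difference-of-ratios (DoR) fairness property, let $\pi$ be a Static-Fair shield with period $T$, and let $\tau=\tau_1\cdots\tau_m\in\mathtt{FT}^{mT}_{\theta,\pi}$ with $|\tau_i|=T$ for all $i\le m$. If $\mathtt{den}^g(\tau_i)=\mathtt{den}^g(\tau_j)$ for all $i,j\le m$ and $g\in\{a,b\}$, then $\psi(\tau)\le\kappa$.
   Context: Input space $\mathcal{X}=\{a,b\}\times\{0,1\}\times\mathbb{C}$ ($\mathbb{C}\subset\mathbb{R}_{\ge0}$ finite; an input $x=(g,r,c)$ is group, recommended decision, intervention cost), output space $\mathcal{Y}=\{0,1\}$, input distribution $\theta\in\mathcal{D}(\mathcal{X})$, bias threshold $\kappa$. A shield is $\pi:(\mathcal{X}\times\mathcal{Y})^*\times\mathcal{X}\to\mathcal{Y}$, and $\Pi^T$ the shields defined on $(\mathcal{X}\times\mathcal{Y})^{\le T}\times\mathcal{X}$. $\mathtt{FT}^t_{\theta,\pi}$: traces $(x_1,y_1)\dots(x_t,y_t)$ with $\theta(x_i)>0$ and $y_i=\pi((x_1,y_1)\dots(x_{i-1},y_{i-1}),x_i)$. $\mathit{cost}(\tau)=\sum c_i\mathbb{1}[r_i\ne y_i]$, $\mathbb{E}[\mathit{cost};\theta,\pi,T]=\sum_{\tau\in(\mathcal{X}\times\mathcal{Y})^T}\mathit{cost}(\tau)\prod\theta(x_i)\mathbb{1}[\tau\in\mathtt{FT}^T_{\theta,\pi}]$. A statistic is single-counter if it maps traces to $\mathbb{N}$, additive if $\mu(\tau\tau')=\mu(\tau)+\mu(\tau')$.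 $\psi$ is DoR if for each group $g$ the welfare is $\mathtt{WF}^g(\tau)=\mathtt{num}^g(\tau)/\mathtt{den}^g(\tau)$ with $\mathtt{num}^g,\mathtt{den}^g$ additive single-counter statistics, and $\psi(\tau)=|\mathtt{WF}^a(\tau)-\mathtt{WF}^b(\tau)|$ (with $\psi=0$ if a welfare is undefined). A finite-horizon (FinHzn) shield for horizon $T$ is $\pi^*\in\arg\min_{\pi\in\Pi_{\mathtt{fair}}^{\theta,T}}\mathbb{E}[\mathit{cost};\theta,\pi,T]$ with $\Pi_{\mathtt{fair}}^{\theta,T}=\{\pi\in\Pi^T:\forall\tau\in\mathtt{FT}^T_{\theta,\pi},\psi(\tau)\le\kappa\}$. The concatenation of shields $\pi_1,\pi_2,\dots\in\Pi^T$ is the shield $\pi$ with $\pi(\tau\tau',x)=\pi_{j+1}(\tau',x)$ whenever $|\tau|=jT$ and $|\tau'|<T$. A Static-Fair shield is the concatenation of infinitely many copies of one FinHzn shield. *)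

theory Defs
  imports "HOL-Probability.Probability"
begin

datatype grp = GA | GB

text \<open>Input x = (g, r, c): group, recommended decision (0/1 as bool), intervention cost.
  Output y in {0,1} rendered as bool.\<close>
type_synonym input = "grp \<times> bool \<times> real"
type_synonym trace = "(input \<times> bool) list"
type_synonym shield = "trace \<Rightarrow> input \<Rightarrow> bool"

definition FT :: "input pmf \<Rightarrow> shield \<Rightarrow> nat \<Rightarrow> trace set" where
  "FT \<theta> \<pi> t = {\<tau>. length \<tau> = t \<and>
      (\<forall>i<t. pmf \<theta> (fst (\<tau>!i)) > 0 \<and> snd (\<tau>!i) = \<pi> (take i \<tau>) (fst (\<tau>!i)))}"

definition cost :: "trace \<Rightarrow> real" where
  "cost \<tau> = (\<Sum>i<length \<tau>. (let ((g,r,c),y) = \<tau>!i in if r \<noteq> y then c else 0))"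

text \<open>Expected cost; the indicator restricts the sum to feasible traces (a finite set
  when the support of theta is finite).\<close>
definition expected_cost :: "input pmf \<Rightarrow> shield \<Rightarrow> nat \<Rightarrow> real" where
  "expected_cost \<theta> \<pi> T =
     (\<Sum>\<tau>\<in>FT \<theta> \<pi> T. cost \<tau> * (\<Prod>i<length \<tau>. pmf \<theta> (fst (\<tau>!i))))"

definition additive :: "(trace \<Rightarrow> nat) \<Rightarrow> bool" where
  "additive \<mu> \<longleftrightarrow> (\<forall>\<tau> \<tau>'. \<mu> (\<tau> @ \<tau>') = \<mu> \<tau> + \<mu> \<tau>')"

definition welfare :: "(grp \<Rightarrow> trace \<Rightarrow> nat) \<Rightarrow> (grp \<Rightarrow> trace \<Rightarrow> nat) \<Rightarrow> grp \<Rightarrow> trace \<Rightarrow> real" where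
  "welfare num den g \<tau> = real (num g \<tau>) / real (den g \<tau>)"

text \<open>Difference-of-ratios property; 0 if some welfare is undefined (denominator 0).\<close>
definition dor_psi :: "(grp \<Rightarrow> trace \<Rightarrow> nat) \<Rightarrow> (grp \<Rightarrow> trace \<Rightarrow> nat) \<Rightarrow> trace \<Rightarrow> real" where
  "dor_psi num den \<tau> =
     (if den GA \<tau> = 0 \<or> den GB \<tau> = 0 then 0
      else \<bar>welfare num den GA \<tau> - welfare num den GB \<tau>\<bar>)"

definition fair_shields :: "input pmf \<Rightarrow> (trace \<Rightarrow> real) \<Rightarrow> real \<Rightarrow> nat \<Rightarrow> shield set" where
  "fair_shields \<theta> \<psi> \<kappa> T = {\<pi>. \<forall>\<tau>\<in>FT \<theta> \<pi> T. \<psi> \<tau> \<le> \<kappa>}"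

definition finhzn_shield :: "input pmf \<Rightarrow> (trace \<Rightarrow> real) \<Rightarrow> real \<Rightarrow> nat \<Rightarrow> shield \<Rightarrow> bool" where
  "finhzn_shield \<theta> \<psi> \<kappa> T \<pi>s \<longleftrightarrow>
     \<pi>s \<in> fair_shields \<theta> \<psi> \<kappa> T \<and>
     (\<forall>\<pi>\<in>fair_shields \<theta> \<psi> \<kappa> T. expected_cost \<theta> \<pi>s T \<le> expected_cost \<theta> \<pi> T)"

text \<open>Concatenation of shields pi_1, pi_2, ... (indexed from 0 here):
  pi(tau tau', x) = pi_{j+1}(tau', x) when |tau| = jT, |tau'| < T.\<close>
definition concat_shields :: "nat \<Rightarrow> (nat \<Rightarrow> shield) \<Rightarrow> shield" where
  "concat_shields T \<pi>s \<tau> x =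
     \<pi>s (length \<tau> div T) (drop ((length \<tau> div T) * T) \<tau>) x"

definition static_fair_shield :: "input pmf \<Rightarrow> (trace \<Rightarrow> real) \<Rightarrow> real \<Rightarrow> nat \<Rightarrow> shield \<Rightarrow> bool" where
  "static_fair_shield \<theta> \<psi> \<kappa> T \<pi> \<longleftrightarrow>
     (\<exists>\<pi>s. finhzn_shield \<theta> \<psi> \<kappa> T \<pi>s \<and> \<pi> = concat_shields T (\<lambda>_. \<pi>s))"

end

theory Submission
  imports Defs
begin

lemma FT_appendD:
  assumes "xs @ ys \<in> FT \<theta> \<pi> t" "length xs = n"
  shows "xs \<in> FT \<theta> \<pi> n"
    "\<forall>i<length ys. pmf \<theta> (fst (ys!i)) > 0 \<and> snd (ys!i) = \<pi> (xs @ take i ys) (fst (ys!i))"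
proof -
  have L: "length (xs@ys) = t" and H: "\<forall>i<t. pmf \<theta> (fst ((xs@ys)!i)) > 0 \<and>
      snd ((xs@ys)!i) = \<pi> (take i (xs@ys)) (fst ((xs@ys)!i))"
    using assms(1) unfolding FT_def by auto
  have "\<forall>i<n. pmf \<theta> (fst (xs!i)) > 0 \<and> snd (xs!i) = \<pi> (take i xs) (fst (xs!i))"
  proof (intro allI impI)
    fix i assume "i < n"
    then show "pmf \<theta> (fst (xs!i)) > 0 \<and> snd (xs!i) = \<pi> (take i xs) (fst (xs!i))"
      using H[rule_format, of i] L assms(2) by (auto simp: nth_append)
  qed
  then show "xs \<in> FT \<theta> \<pi> n" unfolding FT_def using assms(2) by simp
  show "\<forall>i<length ys. pmf \<theta> (fst (ys!i)) > 0 \<and> snd (ys!i) = \<pi> (xs @ take i ys) (fst (ys!i))"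
  proof (intro allI impI)
    fix i assume "i < length ys"
    then show "pmf \<theta> (fst (ys!i)) > 0 \<and> snd (ys!i) = \<pi> (xs @ take i ys) (fst (ys!i))"
      using H[rule_format, of "n+i"] L assms(2) by (auto simp: nth_append)
  qed
qed

lemma blocks_FT:
  assumes "T > 0" "\<forall>b\<in>set bs. length b = T"
    "concat bs \<in> FT \<theta> (concat_shields T (\<lambda>_. \<pi>s)) (length bs * T)"
  shows "\<forall>b\<in>set bs. b \<in> FT \<theta> \<pi>s T"
  using assms(2,3)
proof (induction bs rule: rev_induct)
  case Nil
  then show ?case by simp
next
  case (snoc b bs)
  have lc: "length (concat bs) = length bs * T"
    using snoc.prems(1) by (induction bs) auto
  have c: "concat bs @ b \<in> FT \<theta> (concat_shields T (\<lambda>_. \<pi>s)) (length (bs@[b]) * T)"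
    using snoc.prems(2) by simp
  note D = FT_appendD[OF c lc]
  have IH: "\<forall>b\<in>set bs. b \<in> FT \<theta> \<pi>s T" using snoc D(1) by auto
  have lb: "length b = T" using snoc.prems(1) by auto
  have "\<forall>i<T. pmf \<theta> (fst (b!i)) > 0 \<and> snd (b!i) = \<pi>s (take i b) (fst (b!i))"
  proof (intro allI impI)
    fix i assume i: "i < T"
    have dv: "(length bs * T + i) div T = length bs" using i assms(1) by simp
    have "concat_shields T (\<lambda>_. \<pi>s) (concat bs @ take i b) = \<pi>s (take i b)"
      unfolding concat_shields_def using lc lb i dv by (simp add: min_def)
    then show "pmf \<theta> (fst (b!i)) > 0 \<and> snd (b!i) = \<pi>s (take i b) (fst (b!i))"
      using D(2) lb i by auto
  qed
  then have "b \<in> FT \<theta> \<pi>s T" unfolding FT_def using lb by simp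
  then show ?case using IH by auto
qed

lemma additive_nil: "additive f \<Longrightarrow> f [] = 0"
  unfolding additive_def by (metis append_Nil add_cancel_right_right)

lemma additive_concat: "additive f \<Longrightarrow> f (concat bs) = (\<Sum>i<length bs. f (bs!i))"
proof (induction bs rule: rev_induct)
  case Nil then show ?case by (simp add: additive_nil)
next
  case (snoc b bs)
  then show ?case unfolding additive_def by (simp add: nth_append)
qed

fun build :: "input \<Rightarrow> shield \<Rightarrow> nat \<Rightarrow> trace" where
  "build x p 0 = []"
| "build x p (Suc n) = build x p n @ [(x, p (build x p n) x)]"

lemma build_FT: "pmf \<theta> x > 0 \<Longrightarrow> build x p n \<in> FT \<theta> p n"
proof (induction n)
  case 0 then show ?case by (simp add: FT_def)
next
  case (Suc n)
  then have "length (build x p n) = n" "\<forall>i<n. pmf \<theta> (fst (build x p n!i)) > 0 \<and>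
      snd (build x p n!i) = p (take i (build x p n)) (fst (build x p n!i))"
    by (auto simp: FT_def)
  then show ?case using Suc.prems unfolding FT_def
    by (auto simp: nth_append less_Suc_eq)
qed

lemma dor_nonneg: "dor_psi num den \<tau> \<ge> 0"
  unfolding dor_psi_def by auto

theorem theorem6p2:
  fixes \<theta> :: "input pmf" and C :: "real set" and \<kappa> :: real and T m :: nat
    and num den :: "grp \<Rightarrow> trace \<Rightarrow> nat" and \<psi> :: "trace \<Rightarrow> real"
    and \<pi> :: shield and \<tau> :: trace and \<tau>s :: "trace list"
  assumes "finite C" and "C \<subseteq> {0..}"
    and "set_pmf \<theta> \<subseteq> {(g, r, c). c \<in> C}"
    and "\<forall>g. additive (num g) \<and> additive (den g)"
    and "\<psi> = dor_psi num den"
    and "static_fair_shield \<theta> \<psi> \<kappa> T \<pi>"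
    and "\<tau> \<in> FT \<theta> \<pi> (m * T)"
    and "length \<tau>s = m" and "\<tau> = concat \<tau>s" and "\<forall>b\<in>set \<tau>s. length b = T"
    and "\<forall>i<m. \<forall>j<m. \<forall>g. den g (\<tau>s ! i) = den g (\<tau>s ! j)"
  shows "\<psi> \<tau> \<le> \<kappa>"
proof -
  obtain \<pi>s where fh: "finhzn_shield \<theta> \<psi> \<kappa> T \<pi>s" and pi: "\<pi> = concat_shields T (\<lambda>_. \<pi>s)"
    using assms(6) unfolding static_fair_shield_def by auto
  have fair: "\<forall>t\<in>FT \<theta> \<pi>s T. \<psi> t \<le> \<kappa>"
    using fh unfolding finhzn_shield_def fair_shields_def by auto
  obtain x where x: "x \<in> set_pmf \<theta>" using set_pmf_not_empty by fastforce
  then have "pmf \<theta> x > 0" by (simp add: pmf_positive)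
  then have "\<psi> (build x \<pi>s T) \<le> \<kappa>" using fair build_FT by blast
  then have k0: "0 \<le> \<kappa>" using dor_nonneg[of num den] assms(5) by (metis order_trans)
  show ?thesis
  proof (cases "T = 0 \<or> m = 0")
    case True
    then have "\<tau> = []" using assms(7) unfolding FT_def by auto
    then have "\<psi> \<tau> = 0" using assms(4,5) additive_nil unfolding dor_psi_def by auto
    then show ?thesis using k0 by simp
  next
    case False
    then have T0: "T > 0" and m0: "m > 0" by auto
    have blk: "\<forall>b\<in>set \<tau>s. b \<in> FT \<theta> \<pi>s T"
      using blocks_FT[OF T0 assms(10)] assms(7,8,9) pi by auto
    have bk: "\<psi> (\<tau>s!i) \<le> \<kappa>" if "i < m" for i
      using fair blk that assms(8) by (simp)
    define d where "d g = den g (\<tau>s!0)" for g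
    have dd: "den g (\<tau>s!i) = d g" if "i < m" for g i
      unfolding d_def using assms(11) that m0 by blast
    have dt: "den g \<tau> = m * d g" for g
    proof -
      have "den g \<tau> = (\<Sum>i<m. den g (\<tau>s!i))"
        using additive_concat[of "den g" \<tau>s] assms(4,8,9) by simp
      also have "\<dots> = (\<Sum>i<m. d g)" using dd by (intro sum.cong) auto
      finally show ?thesis by simp
    qed
    have nt: "num g \<tau> = (\<Sum>i<m. num g (\<tau>s!i))" for g
      using additive_concat[of "num g" \<tau>s] assms(4,8,9) by simp
    show ?thesis
    proof (cases "d GA = 0 \<or> d GB = 0")
      case True
      then show ?thesis using dt k0 assms(5) unfolding dor_psi_def by auto
    next
      case False
      define w where "w g i = real (num g (\<tau>s!i)) / real (d g)" for g i
      have wt: "welfare num den g \<tau> = (\<Sum>i<m. w g i) / m" for g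
        unfolding welfare_def w_def dt nt
        by (simp add: sum_divide_distrib[symmetric] divide_divide_eq_left mult.commute)
      have bi: "\<bar>w GA i - w GB i\<bar> \<le> \<kappa>" if "i < m" for i
        using bk[OF that] assms(5) False dd[OF that] unfolding dor_psi_def welfare_def w_def
        by auto
      have "\<psi> \<tau> = \<bar>(\<Sum>i<m. w GA i - w GB i)\<bar> / m"
      proof -
        have "\<psi> \<tau> = \<bar>welfare num den GA \<tau> - welfare num den GB \<tau>\<bar>"
          using assms(5) False dt m0 unfolding dor_psi_def by simp
        also have "\<dots> = \<bar>(\<Sum>i<m. w GA i) - (\<Sum>i<m. w GB i)\<bar> / m"
          unfolding wt diff_divide_distrib[symmetric] by simp
        finally show ?thesis by (simp add: sum_subtractf)
      qed
      also have "\<dots> \<le> (\<Sum>i<m. \<bar>w GA i - w GB i\<bar>) / m"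
        by (simp add: divide_right_mono sum_abs)
      also have "\<dots> \<le> (\<Sum>i<m. \<kappa>) / m"
        by (intro divide_right_mono sum_mono bi) auto
      also have "\<dots> = \<kappa>" using m0 by simp
      finally show ?thesis .
    qed
  qed
qed

end
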